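(* Let $k\ge1$. The generating function $\sum_{n\ge0}d_k(n)q^n$, where $d_k(n)=\sum_{\lambda\vdash n}\#\{s: h_{s,1}(\lambda)=k\}$ is the total number of first-column hooks of length $k$ over all partitions of $n$, equals $$\frac{q^k}{(q^k;q)_\infty}\sum_{l=1}^k\frac{1}{(q;q)_{k-l}} .$$
   Context: A partition $\lambda=(\lambda_1\ge\cdots\ge\lambda_t>0)$ has first-column hook lengths $h_{s,1}(\lambda)=\lambda_s+(t-s)$, $1\le s\le t$. Notation: $(a;q)_\infty=\prod_{j\ge0}(1-aq^j)$, $(q;q)_m=\prod_{j=1}^m(1-q^j)$. *)

theory Defs
  imports "HOL-Analysis.Analysis"
begin

definition partitions :: "nat \<Rightarrow> nat list set" where
  "partitions n = {xs. sorted_wrt (\<ge>) xs \<and> (\<forall>x\<in>set xs. 0 < x) \<and> sum_list xs = n}"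

text \<open>First-column hook length h_{s+1,1} = lambda_{s+1} + (t - (s+1)), with 0-based index s.\<close>
definition fc_hook :: "nat list \<Rightarrow> nat \<Rightarrow> nat" where
  "fc_hook xs s = xs ! s + (length xs - Suc s)"

definition d_count :: "nat \<Rightarrow> nat \<Rightarrow> nat" where
  "d_count k n = (\<Sum>xs\<in>partitions n. card {s. s < length xs \<and> fc_hook xs s = k})"

definition qpoch_inf :: "complex \<Rightarrow> complex \<Rightarrow> complex" where
  "qpoch_inf a q = (\<Prod>j. 1 - a * q ^ j)"

definition qpoch_fin :: "complex \<Rightarrow> nat \<Rightarrow> complex" where
  "qpoch_fin q m = (\<Prod>j=1..m. 1 - q ^ j)"

end

theory Submission
  imports Defs
begin

definition S :: "nat \<Rightarrow> nat \<Rightarrow> nat list set" where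
  "S m n = {xs \<in> partitions n. \<forall>x\<in>set xs. m \<le> x}"

definition pge :: "nat \<Rightarrow> nat \<Rightarrow> nat" where
  "pge m n = card (S m n)"

definition hc :: "nat \<Rightarrow> nat list \<Rightarrow> nat" where
  "hc k xs = card {s. s < length xs \<and> fc_hook xs s = k}"

definition fk :: "nat \<Rightarrow> nat \<Rightarrow> nat \<Rightarrow> nat" where
  "fk k m n = (\<Sum>xs\<in>S m n. hc k xs)"

lemma length_le_sum_list: "\<forall>x\<in>set xs. 0 < (x::nat) \<Longrightarrow> length xs \<le> sum_list xs"
  by (induction xs) auto

lemma finite_partitions: "finite (partitions n)"
proof -
  have "partitions n \<subseteq> {xs. set xs \<subseteq> {0..n} \<and> length xs \<le> n}"
    unfolding partitions_def using length_le_sum_list member_le_sum_list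
    by fastforce
  thus ?thesis by (rule finite_subset) (intro finite_lists_length_le, simp)
qed

lemma finite_S: "finite (S m n)"
  unfolding S_def using finite_partitions by simp

lemma S_0: "S m 0 = {[]}"
  unfolding S_def partitions_def
  by (auto simp: sum_list_eq_0_iff) (metis neq_Nil_conv list.set_intros(1) less_irrefl)

lemma S_app: "m \<ge> 1 \<Longrightarrow> (ys @ [a] \<in> S m n) \<longleftrightarrow> m \<le> a \<and> a \<le> n \<and> ys \<in> S a (n - a)"
  unfolding S_def partitions_def
  by (auto simp: sorted_wrt_append)

lemma S_decomp:
  assumes "m \<ge> 1" "n > 0"
  shows "(\<Sum>xs\<in>S m n. \<phi> xs) = (\<Sum>a\<in>{m..n}. \<Sum>ys\<in>S a (n - a). \<phi> (ys @ [a]))"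
proof -
  have bij: "bij_betw (\<lambda>(a, ys). ys @ [a]) (SIGMA a:{m..n}. S a (n - a)) (S m n)"
  proof (rule bij_betwI[where g = "\<lambda>xs. (last xs, butlast xs)"])
    show "(\<lambda>(a, ys). ys @ [a]) \<in> (SIGMA a:{m..n}. S a (n - a)) \<rightarrow> S m n"
      using S_app assms(1) by auto
    show "(\<lambda>xs. (last xs, butlast xs)) \<in> S m n \<rightarrow> (SIGMA a:{m..n}. S a (n - a))"
    proof
      fix xs assume xs: "xs \<in> S m n"
      have "xs \<noteq> []" using xs assms unfolding S_def partitions_def by auto
      then have "xs = butlast xs @ [last xs]" by simp
      with xs have "butlast xs @ [last xs] \<in> S m n" by simp
      thus "(last xs, butlast xs) \<in> (SIGMA a:{m..n}. S a (n - a))"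
        using S_app assms(1) by auto
    qed
    show "\<And>x. x \<in> (SIGMA a:{m..n}. S a (n - a)) \<Longrightarrow> (\<lambda>xs. (last xs, butlast xs)) ((\<lambda>(a, ys). ys @ [a]) x) = x"
      by auto
    show "\<And>y. y \<in> S m n \<Longrightarrow> (\<lambda>(a, ys). ys @ [a]) ((\<lambda>xs. (last xs, butlast xs)) y) = y"
    proof -
      fix y assume y: "y \<in> S m n"
      have "y \<noteq> []" using y assms unfolding S_def partitions_def by auto
      thus "(\<lambda>(a, ys). ys @ [a]) ((\<lambda>xs. (last xs, butlast xs)) y) = y" by simp
    qed
  qed
  have "(\<Sum>xs\<in>S m n. \<phi> xs) = (\<Sum>x\<in>(SIGMA a:{m..n}. S a (n - a)). \<phi> ((\<lambda>(a, ys). ys @ [a]) x))"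
    using sum.reindex_bij_betw[OF bij, of \<phi>] by simp
  also have "\<dots> = (\<Sum>a\<in>{m..n}. \<Sum>ys\<in>S a (n - a). \<phi> (ys @ [a]))"
    using sum.Sigma[of "{m..n}" "\<lambda>a. S a (n-a)" "\<lambda>a ys. \<phi> (ys@[a])"]
    by (simp add: finite_S split_def)
  finally show ?thesis .
qed

lemma hc_app:
  assumes "k \<ge> 1"
  shows "hc k (ys @ [a]) = (if a = k then 1 else 0) + hc (k - 1) ys"
proof -
  have "{s. s < length (ys @ [a]) \<and> fc_hook (ys @ [a]) s = k} =
        {s. s < length ys \<and> fc_hook ys s = k - 1} \<union> (if a = k then {length ys} else {})"
    using assms by (auto simp: fc_hook_def nth_append less_Suc_eq)
  moreover have "card ({s. s < length ys \<and> fc_hook ys s = k - 1} \<union> (if a = k then {length ys} else {}))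
      = card {s. s < length ys \<and> fc_hook ys s = k - 1} + (if a = k then 1 else 0)"
    by (subst card_Un_disjoint) auto
  ultimately show ?thesis unfolding hc_def by simp
qed

lemma hc_zero:
  assumes "\<forall>x\<in>set xs. m \<le> x" "k < m"
  shows "hc k xs = 0"
proof -
  have "{s. s < length xs \<and> fc_hook xs s = k} = {}"
  proof -
    { fix s assume "s < length xs"
      then have "xs ! s \<ge> m" using assms(1) by auto
      then have "fc_hook xs s \<noteq> k" using assms(2) unfolding fc_hook_def by auto }
    thus ?thesis by auto
  qed
  thus ?thesis unfolding hc_def by simp
qed

lemma fk_zero: "k < m \<Longrightarrow> fk k m n = 0"
  unfolding fk_def by (rule sum.neutral) (auto simp: S_def intro: hc_zero)

lemma pge_decomp:
  assumes "m \<ge> 1" "n > 0"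
  shows "pge m n = (\<Sum>a\<in>{m..n}. pge a (n - a))"
  using S_decomp[OF assms, of "\<lambda>_. 1::nat"] unfolding pge_def by simp

lemma pge_0: "pge m 0 = 1"
  unfolding pge_def S_0 by simp

lemma pge_small: "0 < n \<Longrightarrow> n < m \<Longrightarrow> pge m n = 0"
proof -
  assume a: "0 < n" "n < m"
  have "S m n = {}"
  proof (rule ccontr)
    assume "S m n \<noteq> {}"
    then obtain xs where xs: "xs \<in> S m n" by auto
    then have "xs \<noteq> []" using a unfolding S_def partitions_def by auto
    then obtain x where "x \<in> set xs" by (meson last_in_set)
    with xs have "m \<le> x" "x \<le> n" unfolding S_def partitions_def
      by (auto simp: member_le_sum_list)
    with a show False by simp
  qed
  thus ?thesis unfolding pge_def by simp
qed

lemma pge_rec: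
  assumes "m \<ge> 1"
  shows "pge m n = pge (Suc m) n + (if m \<le> n then pge m (n - m) else 0)"
proof (cases "n = 0")
  case True
  then show ?thesis using assms by (simp add: pge_0)
next
  case False
  show ?thesis
  proof (cases "m \<le> n")
    case True
    have "pge m n = (\<Sum>a\<in>{m..n}. pge a (n - a))" using pge_decomp assms False by simp
    also have "\<dots> = pge m (n - m) + (\<Sum>a\<in>{Suc m..n}. pge a (n - a))"
      using True by (simp add: sum.atLeast_Suc_atMost)
    also have "(\<Sum>a\<in>{Suc m..n}. pge a (n - a)) = pge (Suc m) n"
      using pge_decomp[of "Suc m" n] False by simp
    finally show ?thesis using True by simp
  next
    case False
    then show ?thesis using pge_small[of n m] pge_small[of n "Suc m"] \<open>n \<noteq> 0\<close> by simp
  qed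
qed

lemma pge_mono: "1 \<le> (m::nat) \<Longrightarrow> pge m n \<le> pge 1 n"
  unfolding pge_def by (rule card_mono[OF finite_S]) (auto simp: S_def)

lemma fk_rec:
  assumes "k \<ge> 1" "m \<ge> 1"
  shows "fk k m n = (\<Sum>a\<in>{m..k}. if a \<le> n then (if a = k then pge a (n - a) else 0) + fk (k - 1) a (n - a) else 0)"
proof (cases "n = 0")
  case True
  have "fk k m n = hc k []" unfolding fk_def True S_0 by simp
  also have "\<dots> = 0" unfolding hc_def by simp
  finally show ?thesis using True assms by simp
next
  case False
  define T where "T a = (if a = k then pge a (n - a) else 0) + fk (k - 1) a (n - a)" for a
  have T0: "a > k \<Longrightarrow> T a = 0" for a unfolding T_def using fk_zero[of "k-1" a] by simp
  have "fk k m n = (\<Sum>a\<in>{m..n}. \<Sum>ys\<in>S a (n - a). hc k (ys @ [a]))"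
    unfolding fk_def using S_decomp[OF assms(2)] False by simp
  also have "\<dots> = (\<Sum>a\<in>{m..n}. T a)"
    unfolding T_def fk_def pge_def using assms(1)
    by (intro sum.cong refl) (simp add: hc_app sum.distrib)
  also have "\<dots> = (\<Sum>a\<in>{m..n}. if a \<le> k then T a else 0)"
    using T0 by (intro sum.cong refl) auto
  also have "\<dots> = (\<Sum>a\<in>{a\<in>{m..n}. a \<le> k}. T a)"
    by (rule sum.inter_filter[symmetric]) simp
  also have "{a\<in>{m..n}. a \<le> k} = {a\<in>{m..k}. a \<le> n}" by auto
  also have "(\<Sum>a\<in>{a\<in>{m..k}. a \<le> n}. T a) = (\<Sum>a\<in>{m..k}. if a \<le> n then T a else 0)"
    by (rule sum.inter_filter) simp
  finally show ?thesis unfolding T_def .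
qed

lemma d_count_fk: "d_count k n = fk k 1 n"
proof -
  have "S 1 n = partitions n" unfolding S_def partitions_def by auto
  thus ?thesis unfolding d_count_def fk_def hc_def by simp
qed

section \<open>Analytic part\<close>

lemma shift_part_le:
  fixes r :: real
  assumes "0 \<le> r"
  shows "(\<Sum>n\<le>M. (if m \<le> n then real (pge m (n - m)) else 0) * r ^ n)
         \<le> r ^ m * (\<Sum>n\<le>M. real (pge m n) * r ^ n)"
proof (cases "m \<le> M")
  case True
  have "(\<Sum>n\<le>M. (if m \<le> n then real (pge m (n - m)) else 0) * r ^ n)
        = (\<Sum>n\<in>{m..M}. real (pge m (n - m)) * r ^ n)"
    by (rule sum.mono_neutral_cong_right) auto
  also have "{m..M} = (\<lambda>i. i + m) ` {0..M - m}"
    using True image_add_atLeastAtMost[of m 0 "M - m"] by simp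
  also have "(\<Sum>n\<in>(\<lambda>i. i + m) ` {0..M - m}. real (pge m (n - m)) * r ^ n)
        = (\<Sum>i\<in>{0..M - m}. real (pge m i) * r ^ (i + m))"
    by (subst sum.reindex) (auto simp: inj_on_def)
  also have "\<dots> = r ^ m * (\<Sum>i\<in>{0..M - m}. real (pge m i) * r ^ i)"
    by (simp add: sum_distrib_left power_add mult_ac)
  also have "\<dots> \<le> r ^ m * (\<Sum>n\<le>M. real (pge m n) * r ^ n)"
    using assms by (intro mult_left_mono sum_mono2) auto
  finally show ?thesis .
next
  case False
  then have "(\<Sum>n\<le>M. (if m \<le> n then real (pge m (n - m)) else 0) * r ^ n) = 0"
    by (intro sum.neutral) auto
  moreover have "0 \<le> r ^ m * (\<Sum>n\<le>M. real (pge m n) * r ^ n)"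
    using assms by (intro mult_nonneg_nonneg sum_nonneg) auto
  ultimately show ?thesis by simp
qed

lemma SS_step:
  fixes r :: real
  assumes "0 \<le> r" "m \<ge> 1"
  shows "(\<Sum>n\<le>M. real (pge m n) * r ^ n) * (1 - r ^ m) \<le> (\<Sum>n\<le>M. real (pge (Suc m) n) * r ^ n)"
proof -
  have "(\<Sum>n\<le>M. real (pge m n) * r ^ n) = (\<Sum>n\<le>M. real (pge (Suc m) n) * r ^ n)
     + (\<Sum>n\<le>M. (if m \<le> n then real (pge m (n - m)) else 0) * r ^ n)"
    by (subst pge_rec[OF assms(2)]) (auto simp: sum.distrib algebra_simps intro!: sum.cong)
  with shift_part_le[OF assms(1), of m M] show ?thesis by (simp add: algebra_simps)
qed

lemma SS_bound:
  fixes r :: real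
  assumes "0 \<le> r" "r < 1" "m \<ge> 1" "m \<le> Suc M"
  shows "(\<Sum>n\<le>M. real (pge m n) * r ^ n) \<le> (\<Prod>i\<in>{m..M}. 1 / (1 - r ^ i))"
  using assms(4,3)
proof (induction m rule: inc_induct)
  case base
  have "(\<Sum>n\<le>M. real (pge (Suc M) n) * r ^ n) = (\<Sum>n\<le>M. if n = 0 then 1 else 0)"
    by (intro sum.cong refl) (auto simp: pge_0 pge_small)
  then show ?case by simp
next
  case (step m)
  have rm: "r ^ m < 1" using assms(1,2) step.prems by (simp add: power_less_one_iff)
  have "(\<Sum>n\<le>M. real (pge m n) * r ^ n) * (1 - r ^ m) \<le> (\<Prod>i\<in>{Suc m..M}. 1 / (1 - r ^ i))"
    using order_trans[OF SS_step[OF assms(1) step.prems] step.IH] by simp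
  then have "(\<Sum>n\<le>M. real (pge m n) * r ^ n) \<le> (\<Prod>i\<in>{Suc m..M}. 1 / (1 - r ^ i)) / (1 - r ^ m)"
    using rm by (simp add: pos_le_divide_eq)
  also have "\<dots> = (\<Prod>i\<in>{m..M}. 1 / (1 - r ^ i))"
    using step.hyps by (simp add: prod.atLeast_Suc_atMost)
  finally show ?case .
qed

lemma prod_bound:
  fixes r :: real
  assumes "0 \<le> r" "r < 1"
  shows "(\<Prod>i\<in>{1..M}. 1 / (1 - r ^ i)) \<le> exp (1 / (1 - r) ^ 2)"
proof -
  have "(\<Prod>i\<in>{1..M}. 1 / (1 - r ^ i)) \<le> (\<Prod>i\<in>{1..M}. exp (r ^ i / (1 - r)))"
  proof (rule prod_mono, safe)
    fix i :: nat assume i: "i \<in> {1..M}"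
    have ri: "r ^ i \<le> r" using assms i power_decreasing[of 1 i r] by simp
    have ri1: "r ^ i < 1" using assms i by (simp add: power_less_one_iff)
    show "0 \<le> 1 / (1 - r ^ i)" using ri1 by simp
    have "1 / (1 - r ^ i) = 1 + r ^ i / (1 - r ^ i)" using ri1 by (simp add: field_simps)
    also have "\<dots> \<le> 1 + r ^ i / (1 - r)"
      using ri ri1 assms by (intro add_left_mono divide_left_mono) auto
    also have "\<dots> \<le> exp (r ^ i / (1 - r))" by (rule exp_ge_add_one_self)
    finally show "1 / (1 - r ^ i) \<le> exp (r ^ i / (1 - r))" .
  qed
  also have "\<dots> = exp ((\<Sum>i\<in>{1..M}. r ^ i) / (1 - r))"
    by (simp add: exp_sum sum_divide_distrib)
  also have "\<dots> \<le> exp (1 / (1 - r) ^ 2)"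
  proof -
    have "(\<Sum>i\<in>{1..M}. r ^ i) \<le> (\<Sum>i<Suc M. r ^ i)"
      using assms by (intro sum_mono2) auto
    also have "\<dots> = (1 - r ^ Suc M) / (1 - r)" using assms by (simp only: sum_gp_strict) auto
    also have "\<dots> \<le> 1 / (1 - r)" using assms by (intro divide_right_mono) auto
    finally have "(\<Sum>i\<in>{1..M}. r ^ i) / (1 - r) \<le> 1 / (1 - r) / (1 - r)"
      using assms by (intro divide_right_mono) auto
    thus ?thesis by (simp add: power2_eq_square)
  qed
  finally show ?thesis .
qed

lemma summable_pge1:
  fixes r :: real
  assumes "0 \<le> r" "r < 1"
  shows "summable (\<lambda>n. real (pge 1 n) * r ^ n)"
proof (rule summableI_nonneg_bounded)
  show "0 \<le> real (pge 1 n) * r ^ n" for n using assms by simp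
  fix n
  have "(\<Sum>i<n. real (pge 1 i) * r ^ i) \<le> (\<Sum>i\<le>n. real (pge 1 i) * r ^ i)"
    using assms by (intro sum_mono2) auto
  also have "\<dots> \<le> (\<Prod>i\<in>{1..n}. 1 / (1 - r ^ i))" using SS_bound[OF assms, of 1 n] by simp
  also have "\<dots> \<le> exp (1 / (1 - r) ^ 2)" by (rule prod_bound[OF assms])
  finally show "(\<Sum>i<n. real (pge 1 i) * r ^ i) \<le> exp (1 / (1 - r) ^ 2)" .
qed

lemma shift_sums:
  fixes q :: complex
  assumes "(\<lambda>n. e n * q ^ n) sums E"
  shows "(\<lambda>n. (if a \<le> n then e (n - a) else 0) * q ^ n) sums (q ^ a * E)"
proof -
  have "(\<lambda>i. q ^ a * (e i * q ^ i)) sums (q ^ a * E)" by (rule sums_mult[OF assms])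
  then have "(\<lambda>i. (\<lambda>n. (if a \<le> n then e (n - a) else 0) * q ^ n) (i + a)) sums (q ^ a * E)"
    by (simp add: power_add mult_ac)
  thus ?thesis by (subst (asm) sums_zero_iff_shift) auto
qed

definition Pq :: "complex \<Rightarrow> nat \<Rightarrow> complex" where
  "Pq q m = (\<Sum>n. of_nat (pge m n) * q ^ n)"

context
  fixes q :: complex
  assumes q: "norm q < 1"
begin

lemma summable_pge_norm:
  assumes "m \<ge> 1"
  shows "summable (\<lambda>n. real (pge 1 n) * norm q ^ n)"
    and "summable (\<lambda>n. norm (of_nat (pge m n) * q ^ n))"
proof -
  show s: "summable (\<lambda>n. real (pge 1 n) * norm q ^ n)"
    using summable_pge1[of "norm q"] q by simp
  show "summable (\<lambda>n. norm (of_nat (pge m n) * q ^ n))"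
  proof (rule summable_comparison_test'[OF s])
    fix n
    show "norm (norm (of_nat (pge m n) * q ^ n)) \<le> real (pge 1 n) * norm q ^ n"
      using pge_mono[OF assms, of n] by (simp add: norm_mult norm_power mult_right_mono)
  qed
qed

lemma P_sums: "m \<ge> 1 \<Longrightarrow> (\<lambda>n. of_nat (pge m n) * q ^ n) sums Pq q m"
  unfolding Pq_def by (rule summable_sums, rule summable_norm_cancel, rule summable_pge_norm)

lemma P_rec:
  assumes "m \<ge> 1"
  shows "Pq q m * (1 - q ^ m) = Pq q (Suc m)"
proof -
  have "(\<lambda>n. of_nat (pge (Suc m) n) * q ^ n + (if m \<le> n then of_nat (pge m (n - m)) else 0) * q ^ n)
        sums (Pq q (Suc m) + q ^ m * Pq q m)"
    by (intro sums_add P_sums shift_sums) (use assms in auto)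
  moreover have "(\<lambda>n. of_nat (pge (Suc m) n) * q ^ n + (if m \<le> n then of_nat (pge m (n - m)) else 0) * q ^ n)
        = (\<lambda>n. of_nat (pge m n) * q ^ n)"
  proof (rule ext)
    fix n
    have e: "pge m n = pge (Suc m) n + (if m \<le> n then pge m (n - m) else 0)" by (rule pge_rec[OF assms])
    show "of_nat (pge (Suc m) n) * q ^ n + (if m \<le> n then of_nat (pge m (n - m)) else 0) * q ^ n
        = of_nat (pge m n) * q ^ n"
      unfolding e by (simp add: algebra_simps)
  qed
  ultimately have "(\<lambda>n. of_nat (pge m n) * q ^ n) sums (Pq q (Suc m) + q ^ m * Pq q m)" by simp
  then have "Pq q m = Pq q (Suc m) + q ^ m * Pq q m" using P_sums[OF assms] sums_unique2 by blast
  thus ?thesis by (simp add: algebra_simps)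
qed

lemma P_prod:
  assumes "m \<ge> 1"
  shows "Pq q m * (\<Prod>j<L. 1 - q ^ m * q ^ j) = Pq q (m + L)"
proof (induction L)
  case 0
  then show ?case by simp
next
  case (Suc L)
  have "Pq q m * (\<Prod>j<Suc L. 1 - q ^ m * q ^ j) = Pq q (m + L) * (1 - q ^ (m + L))"
    using Suc by (simp add: power_add mult.assoc)
  also have "\<dots> = Pq q (m + Suc L)" using P_rec[of "m + L"] assms by simp
  finally show ?case .
qed

lemma P_lim: "(\<lambda>N. Pq q N) \<longlonglongrightarrow> 1"
proof -
  define g where "g n = real (pge 1 n) * norm q ^ n" for n
  have sg: "summable g" unfolding g_def using summable_pge_norm(1)[of 1] by simp
  define T where "T N = (\<Sum>n. g (n + N))" for N
  have T0: "T \<longlonglongrightarrow> 0"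
  proof -
    have "(\<lambda>N. suminf g - (\<Sum>i<N. g i)) \<longlonglongrightarrow> suminf g - suminf g"
      by (intro tendsto_diff tendsto_const summable_LIMSEQ sg)
    moreover have "T = (\<lambda>N. suminf g - (\<Sum>i<N. g i))"
      unfolding T_def by (rule ext, rule suminf_minus_initial_segment[OF sg])
    ultimately show ?thesis by simp
  qed
  have bound: "norm (Pq q N - 1) \<le> T N" if N: "N \<ge> 1" for N
  proof -
    define f where "f n = of_nat (pge N n) * q ^ n - (if n = 0 then 1 else 0)" for n
    have "f sums (Pq q N - 1)"
      unfolding f_def by (intro sums_diff P_sums N) (rule sums_single[of 0 "\<lambda>_. 1::complex", simplified])
    moreover have "f i = 0" if "i < N" for i
      using that by (cases "i = 0") (auto simp: f_def pge_0 pge_small)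
    ultimately have "(\<lambda>i. f (i + N)) sums (Pq q N - 1)" by (subst sums_zero_iff_shift) auto
    moreover have "(\<lambda>i. g (i + N)) sums T N"
      unfolding T_def by (rule summable_sums) (use sg in simp)
    moreover have "norm (f (i + N)) \<le> g (i + N)" for i
      using N pge_mono[OF N, of "i + N"] by (simp add: f_def g_def norm_mult norm_power mult_right_mono)
    ultimately show ?thesis by (rule norm_sums_le)
  qed
  have "(\<lambda>N. Pq q N - 1) \<longlonglongrightarrow> 0"
    by (rule Lim_null_comparison[OF _ T0]) (use bound in \<open>auto intro!: eventually_sequentiallyI[of 1]\<close>)
  thus ?thesis by (simp add: LIM_zero_iff)
qed

lemma prod_lim: "(\<lambda>L. \<Prod>j<L. 1 - a * q ^ j) \<longlonglongrightarrow> qpoch_inf a q"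
proof -
  have "summable (\<lambda>j. norm ((1 - a * q ^ j) - 1))"
    using summable_mult[OF summable_geometric[of "norm q"], of "norm a"] q
    by (simp add: norm_mult norm_power)
  then have "convergent_prod (\<lambda>j. 1 - a * q ^ j)"
    by (intro abs_convergent_prod_imp_convergent_prod summable_imp_abs_convergent_prod)
  then have "(\<lambda>L. \<Prod>j\<le>L. 1 - a * q ^ j) \<longlonglongrightarrow> qpoch_inf a q"
    unfolding qpoch_inf_def by (rule convergent_prod_LIMSEQ)
  thus ?thesis by (subst LIMSEQ_lessThan_iff_atMost)
qed

lemma P_eq:
  assumes "m \<ge> 1"
  shows "Pq q m * qpoch_inf (q ^ m) q = 1"
proof -
  have "(\<lambda>L. Pq q m * (\<Prod>j<L. 1 - q ^ m * q ^ j)) \<longlonglongrightarrow> Pq q m * qpoch_inf (q ^ m) q"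
    by (intro tendsto_mult tendsto_const prod_lim)
  moreover have "(\<lambda>L. Pq q m * (\<Prod>j<L. 1 - q ^ m * q ^ j)) \<longlonglongrightarrow> 1"
    unfolding P_prod[OF assms] using LIMSEQ_ignore_initial_segment[OF P_lim, of m]
    by (simp add: add.commute)
  ultimately show ?thesis using LIMSEQ_unique by blast
qed

end

section \<open>Algebra\<close>

fun B :: "complex \<Rightarrow> nat \<Rightarrow> nat \<Rightarrow> complex" where
  "B q 0 r = (if r = 0 then 1 else 0)"
| "B q (Suc n) 0 = 1"
| "B q (Suc n) (Suc r) = q ^ Suc r * B q n (Suc r) + B q n r"

definition D :: "complex \<Rightarrow> nat \<Rightarrow> nat \<Rightarrow> complex" where
  "D q k r = (\<Prod>i\<in>{k - r..<k}. 1 - q ^ i)"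

definition g :: "complex \<Rightarrow> nat \<Rightarrow> nat \<Rightarrow> complex" where
  "g q k m = (\<Sum>r=0..k - m. q ^ ((m - 1) * r) * B q (k - m) r / D q k r)"

lemma B_n0: "B q n 0 = 1"
  by (cases n) auto

lemma B_zero: "n < r \<Longrightarrow> B q n r = 0"
proof (induction n arbitrary: r)
  case 0
  then show ?case by simp
next
  case (Suc n)
  then obtain r' where "r = Suc r'" by (cases r) auto
  with Suc show ?case by simp
qed

lemma B_pascal: "B q (Suc n) r = q ^ r * B q n r + (if r = 0 then 0 else B q n (r - 1))"
  by (cases r) (auto simp: B_n0)

lemma D_0: "D q k 0 = 1"
  unfolding D_def by simp

lemma D_Suc: "r \<le> k \<Longrightarrow> D q (Suc k) (Suc r) = D q k r * (1 - q ^ k)"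
  unfolding D_def by (simp add: prod.atLeastLessThan_Suc)

lemma D_low: "r < k \<Longrightarrow> D q k (Suc r) = (1 - q ^ (k - Suc r)) * D q k r"
  unfolding D_def by (subst prod.atLeast_Suc_lessThan) (auto simp: Suc_diff_Suc)

lemma qpow_ne1: "norm (q::complex) < 1 \<Longrightarrow> i \<ge> 1 \<Longrightarrow> 1 - q ^ i \<noteq> 0"
proof
  assume "norm q < 1" "i \<ge> 1" "1 - q ^ i = 0"
  then have "norm (q ^ i) = 1" by simp
  moreover have "norm (q ^ i) < 1" using \<open>norm q < 1\<close> \<open>i \<ge> 1\<close>
    by (simp add: norm_power power_less_one_iff)
  ultimately show False by simp
qed

lemma D_nz: "norm q < 1 \<Longrightarrow> r < k \<Longrightarrow> D q k r \<noteq> 0"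
  unfolding D_def using qpow_ne1[of q] by (auto simp: prod_zero_iff)

lemma g_KK: "g q K K = 1"
  unfolding g_def by (simp add: D_0)

lemma gstep:
  assumes q: "norm q < 1" and m: "1 \<le> m" "m < K"
  shows "g q K m = g q K (Suc m) + q ^ (m - 1) * g q (K - 1) m / (1 - q ^ (K - 1))"
proof -
  obtain K' where K: "K = Suc K'" using m by (cases K) auto
  define n' where "n' = K' - m"
  have Km: "K - m = Suc n'" unfolding n'_def K using m K by simp
  have nK: "n' \<le> K'" unfolding n'_def by simp
  have qK: "1 - q ^ K' \<noteq> 0" using qpow_ne1[OF q, of K'] m K by simp
  have "g q K m = (\<Sum>r=0..Suc n'. q ^ ((m - 1) * r) * B q (Suc n') r / D q K r)"
    unfolding g_def Km ..
  also have "\<dots> = (\<Sum>r=0..Suc n'. q ^ (m * r) * B q n' r / D q K r)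
      + (\<Sum>r=0..Suc n'. q ^ ((m - 1) * r) * (if r = 0 then 0 else B q n' (r - 1)) / D q K r)"
  proof -
    have "q ^ ((m - 1) * r) * q ^ r = q ^ (m * r)" for r
      using m by (simp add: power_add[symmetric] algebra_simps)
    then show ?thesis
      unfolding B_pascal by (simp add: sum.distrib[symmetric] add_divide_distrib distrib_left mult.assoc[symmetric])
  qed
  also have "(\<Sum>r=0..Suc n'. q ^ (m * r) * B q n' r / D q K r) = g q K (Suc m)"
  proof -
    have "K - Suc m = n'" using Km by simp
    then show ?thesis unfolding g_def by (simp add: B_zero)
  qed
  also have "(\<Sum>r=0..Suc n'. q ^ ((m - 1) * r) * (if r = 0 then 0 else B q n' (r - 1)) / D q K r)
      = (\<Sum>r=0..n'. q ^ ((m - 1) * Suc r) * B q n' r / D q K (Suc r))"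
    by (subst sum.atLeast0_atMost_Suc_shift) simp
  also have "\<dots> = (\<Sum>r=0..n'. q ^ (m - 1) * (q ^ ((m - 1) * r) * B q n' r / D q K' r) / (1 - q ^ K'))"
  proof (rule sum.cong[OF refl])
    fix r assume "r \<in> {0..n'}"
    then have "r \<le> K'" using nK by simp
    then show "q ^ ((m - 1) * Suc r) * B q n' r / D q K (Suc r)
        = q ^ (m - 1) * (q ^ ((m - 1) * r) * B q n' r / D q K' r) / (1 - q ^ K')"
      unfolding K by (simp add: D_Suc power_add)
  qed
  also have "\<dots> = q ^ (m - 1) * g q (K - 1) m / (1 - q ^ (K - 1))"
  proof -
    have "K - 1 - m = n'" unfolding K n'_def by simp
    then show ?thesis unfolding g_def K
      by (simp add: sum_distrib_left sum_divide_distrib)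
  qed
  finally show ?thesis .
qed

lemma B_fin: "r \<le> n \<Longrightarrow> B q n r * qpoch_fin q r = D q (Suc n) r"
proof (induction n arbitrary: r)
  case 0
  then show ?case by (simp add: qpoch_fin_def D_0)
next
  case (Suc n)
  show ?case
  proof (cases r)
    case 0
    then show ?thesis by (simp add: qpoch_fin_def D_0)
  next
    case (Suc r')
    have fin: "qpoch_fin q (Suc r') = qpoch_fin q r' * (1 - q ^ Suc r')"
      unfolding qpoch_fin_def by simp
    have r'n: "r' \<le> n" using Suc.prems Suc by simp
    have IH0: "B q n r' * qpoch_fin q r' = D q (Suc n) r'" using Suc.IH r'n by simp
    have X: "B q n (Suc r') * qpoch_fin q (Suc r') = (1 - q ^ (n - r')) * D q (Suc n) r'"
      if "Suc r' \<le> n"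
      using Suc.IH[OF that] D_low[of r' "Suc n" q] that by simp
    have "B q (Suc n) r * qpoch_fin q r
        = q ^ Suc r' * (B q n (Suc r') * qpoch_fin q (Suc r')) + (B q n r' * qpoch_fin q r') * (1 - q ^ Suc r')"
      unfolding Suc by (simp add: fin algebra_simps)
    also have "\<dots> = D q (Suc n) r' * (1 - q ^ Suc n)"
    proof (cases "Suc r' \<le> n")
      case True
      have e: "q ^ Suc r' * q ^ (n - r') = q ^ Suc n"
        using True by (simp add: power_add[symmetric])
      show ?thesis unfolding X[OF True] IH0 using e by (simp add: algebra_simps) metis
    next
      case False
      then have "r' = n" using r'n by simp
      then show ?thesis using IH0 by (simp add: B_zero algebra_simps)
    qed
    also have "\<dots> = D q (Suc (Suc n)) r" unfolding Suc using D_Suc[of r' "Suc n" q] r'n by simp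
    finally show ?thesis .
  qed
qed


lemma Alg:
  assumes q: "norm q < 1" and m: "1 \<le> m" "m \<le> K"
  shows "q ^ K * Pq q K * g q K m = q ^ K * Pq q K
          + (\<Sum>a\<in>{m..<K}. q ^ a * (q ^ (K - 1) * Pq q (K - 1) * g q (K - 1) a))"
  using m(2,1)
proof (induction m rule: inc_induct)
  case base
  then show ?case by (simp add: g_KK)
next
  case (step n)
  obtain K' where K: "K = Suc K'" using step by (cases K) auto
  obtain n' where n: "n = Suc n'" using step by (cases n) auto
  have K1: "K' \<ge> 1" using step K n by simp
  have PK: "Pq q (Suc K') = Pq q K' * (1 - q ^ K')" using P_rec[OF q K1] by simp
  have qK: "1 - q ^ K' \<noteq> 0" using qpow_ne1[OF q K1] .
  have gs: "g q K n = g q K (Suc n) + q ^ (n - 1) * g q (K - 1) n / (1 - q ^ (K - 1))"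
    using gstep[OF q step.prems step.hyps(2)] .
  have trm: "q ^ K * Pq q K * (q ^ (n - 1) * g q (K - 1) n / (1 - q ^ (K - 1)))
      = q ^ n * (q ^ (K - 1) * Pq q (K - 1) * g q (K - 1) n)"
    unfolding PK K n using qK by (simp add: field_simps)
  have "q ^ K * Pq q K * g q K n = q ^ K * Pq q K * g q K (Suc n)
      + q ^ n * (q ^ (K - 1) * Pq q (K - 1) * g q (K - 1) n)"
    unfolding gs trm[symmetric] by (simp add: algebra_simps)
  also have "q ^ K * Pq q K * g q K (Suc n) = q ^ K * Pq q K
      + (\<Sum>a\<in>{Suc n..<K}. q ^ a * (q ^ (K - 1) * Pq q (K - 1) * g q (K - 1) a))"
    using step.IH step.prems by simp
  finally show ?case using step.hyps(2) by (simp add: sum.atLeast_Suc_lessThan algebra_simps)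
qed

lemma e_split: "(of_nat ((if a = Suc K then x else 0) + (y::nat)) :: complex) * q ^ j
   = (if a = Suc K then of_nat x * q ^ j else 0) + of_nat y * q ^ j"
  by (cases "a = Suc K") (simp_all add: distrib_right)

definition V :: "complex \<Rightarrow> nat \<Rightarrow> nat \<Rightarrow> complex" where
  "V q k m = (if m \<le> k then q ^ k * Pq q k * g q k m else 0)"

lemma main_sums:
  assumes q: "norm q < 1"
  shows "m \<ge> 1 \<Longrightarrow> (\<lambda>n. of_nat (fk k m n) * q ^ n) sums V q k m"
proof (induction k arbitrary: m)
  case 0
  then show ?case by (simp add: fk_zero V_def)
next
  case (Suc K)
  define e where "e a j = (of_nat ((if a = Suc K then pge a j else 0) + fk K a j) :: complex)" for a j
  have es: "(\<lambda>j. e a j * q ^ j) sums ((if a = Suc K then Pq q a else 0) + V q K a)"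
    if "a \<in> {m..Suc K}" for a
  proof -
    have a1: "a \<ge> 1" using that Suc.prems by simp
    have "(\<lambda>j. (if a = Suc K then of_nat (pge a j) * q ^ j else 0) + of_nat (fk K a j) * q ^ j)
       sums ((if a = Suc K then Pq q a else 0) + V q K a)"
      by (intro sums_add Suc.IH a1) (use a1 in \<open>auto intro: P_sums[OF q]\<close>)
    moreover have ee: "e a j * q ^ j = (if a = Suc K then of_nat (pge a j) * q ^ j else 0) + of_nat (fk K a j) * q ^ j" for j
      unfolding e_def by (rule e_split[of a K "pge a j" "fk K a j" q j])
    ultimately show ?thesis by (simp only: ee)
  qed
  have "(\<lambda>n. \<Sum>a\<in>{m..Suc K}. (if a \<le> n then e a (n - a) else 0) * q ^ n)
      sums (\<Sum>a\<in>{m..Suc K}. q ^ a * ((if a = Suc K then Pq q a else 0) + V q K a))"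
    by (intro sums_sum shift_sums es)
  moreover have "(\<lambda>n. \<Sum>a\<in>{m..Suc K}. (if a \<le> n then e a (n - a) else 0) * q ^ n)
      = (\<lambda>n. of_nat (fk (Suc K) m n) * q ^ n)"
  proof (rule ext)
    fix n
    show "(\<Sum>a\<in>{m..Suc K}. (if a \<le> n then e a (n - a) else 0) * q ^ n) = of_nat (fk (Suc K) m n) * q ^ n"
    proof -
      have fr: "fk (Suc K) m n = (\<Sum>a\<in>{m..Suc K}. if a \<le> n then (if a = Suc K then pge a (n - a) else 0) + fk (Suc K - 1) a (n - a) else 0)"
        by (rule fk_rec) (use Suc.prems in auto)
      show ?thesis unfolding fr of_nat_sum sum_distrib_right
        by (intro sum.cong refl) (simp add: e_def)
    qed
  qed
  moreover have "(\<Sum>a\<in>{m..Suc K}. q ^ a * ((if a = Suc K then Pq q a else 0) + V q K a)) = V q (Suc K) m"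
  proof (cases "m \<le> Suc K")
    case False
    then show ?thesis by (simp add: V_def)
  next
    case True
    have "(\<Sum>a\<in>{m..Suc K}. q ^ a * ((if a = Suc K then Pq q a else 0) + V q K a))
        = q ^ Suc K * Pq q (Suc K) + (\<Sum>a\<in>{m..<Suc K}. q ^ a * (q ^ K * Pq q K * g q K a))"
    proof -
      have "{m..Suc K} = insert (Suc K) {m..<Suc K}" using True by auto
      moreover have "(\<Sum>a\<in>{m..<Suc K}. q ^ a * ((if a = Suc K then Pq q a else 0) + V q K a))
          = (\<Sum>a\<in>{m..<Suc K}. q ^ a * (q ^ K * Pq q K * g q K a))"
        by (intro sum.cong refl) (auto simp: V_def)
      ultimately show ?thesis by (simp add: V_def)
    qed
    also have "\<dots> = V q (Suc K) m"
      using Alg[OF q Suc.prems True] True by (simp add: V_def)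
    finally show ?thesis .
  qed
  ultimately show ?case by simp
qed

theorem theorem4p3:
  fixes k :: nat and q :: complex
  assumes "k \<ge> 1" and "norm q < 1"
  shows "(\<lambda>n. of_nat (d_count k n) * q ^ n) sums
           (q ^ k / qpoch_inf (q ^ k) q * (\<Sum>l=1..k. 1 / qpoch_fin q (k - l)))"
proof -
  have s: "(\<lambda>n. of_nat (d_count k n) * q ^ n) sums V q k 1"
    unfolding d_count_fk using main_sums[OF assms(2), of 1 k] by simp
  have P: "Pq q k = 1 / qpoch_inf (q ^ k) q"
  proof -
    have e: "Pq q k * qpoch_inf (q ^ k) q = 1" using P_eq[OF assms(2,1)] .
    then have "qpoch_inf (q ^ k) q \<noteq> 0" by auto
    with e show ?thesis by (simp add: eq_divide_eq)
  qed
  obtain k' where k: "k = Suc k'" using assms(1) by (cases k) auto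
  have "g q k 1 = (\<Sum>r=0..k'. B q k' r / D q (Suc k') r)"
    unfolding g_def k by simp
  also have "\<dots> = (\<Sum>r=0..k'. 1 / qpoch_fin q r)"
  proof (rule sum.cong[OF refl])
    fix r assume "r \<in> {0..k'}"
    then have r: "r \<le> k'" by simp
    have "D q (Suc k') r \<noteq> 0" using D_nz[OF assms(2)] r by simp
    moreover have bf: "B q k' r * qpoch_fin q r = D q (Suc k') r" by (rule B_fin[OF r])
    ultimately have f0: "qpoch_fin q r \<noteq> 0" by auto
    from bf f0 have "B q k' r = D q (Suc k') r / qpoch_fin q r" by (simp add: eq_divide_eq)
    with \<open>D q (Suc k') r \<noteq> 0\<close> show "B q k' r / D q (Suc k') r = 1 / qpoch_fin q r"
      by simp
  qed
  also have "\<dots> = (\<Sum>l=1..k. 1 / qpoch_fin q (k - l))"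
    by (rule sum.reindex_bij_witness[of _ "\<lambda>l. k - l" "\<lambda>r. k - r"]) (auto simp: k)
  finally have g1: "g q k 1 = (\<Sum>l=1..k. 1 / qpoch_fin q (k - l))" .
  have "V q k 1 = q ^ k / qpoch_inf (q ^ k) q * (\<Sum>l=1..k. 1 / qpoch_fin q (k - l))"
    unfolding V_def g1 P using assms(1) by simp
  with s show ?thesis by simp
qed

end
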